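(* Let $A,B\in\mathbb{S}^n$, $a,b\in\mathbb{R}^n$, $a_0,b_0\in\mathbb{R}$, $C\in\mathbb{R}^{m\times n}$, $d\in\mathbb{R}^m$, and suppose $\{x\in\mathbb{R}^n_+\mid Cx=d\}$ is nonempty and bounded and $q(x)=x^\top Ax+a^\top x+a_0>0$ on it. Then the optimal value of $\min\bigl\{\frac{x^\top Bx+b^\top x+b_0}{x^\top Ax+a^\top x+a_0}\bigm| x\ge0,\ Cx=d\bigr\}$ equals the optimal value of \[ \min\ b_0\rho+b^\top y+\langle B,Y\rangle\ \text{ s.t. }\ \begin{pmatrix}\rho&y^\top\\ y&Y\end{pmatrix}\in\mathcal{CP}_{n+1},\ \langle A,Y\rangle+\langle a,y\rangle+a_0\rho=1,\ \operatorname{Tr}\bigl(CYC^\top-Cyd^\top-dy^\top C^\top+\rho dd^\top\bigr)=0. \]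
   Context: $\mathcal{CP}_d$ is the cone of $d\times d$ completely positive matrices, i.e. matrices of the form $\sum_{i=1}^kh_ih_i^\top$ with $h_i\in\mathbb{R}^d_+$. $\langle X,Y\rangle=\operatorname{Tr}(XY^\top)$; $\mathbb{S}^n$ is the set of symmetric $n\times n$ matrices. *)

theory Defs
  imports "HOL-Analysis.Analysis"
begin

definition outer :: "real^'k \<Rightarrow> real^'l \<Rightarrow> real^'l^'k" where
  "outer u v = (\<chi> i j. u $ i * v $ j)"

definition frob_inner :: "real^'l^'k \<Rightarrow> real^'l^'k \<Rightarrow> real" where
  "frob_inner X Y = trace (X ** transpose Y)"

definition CP :: "(real^'k^'k) set" where
  "CP = {M. \<exists>hs :: (real^'k) list. (\<forall>h\<in>set hs. \<forall>i. 0 \<le> h $ i) \<and>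
              M = sum_list (map (\<lambda>h. outer h h) hs)}"

text \<open>The (n+1)x(n+1) block matrix [[rho, y^T],[y, Y]], index None playing the role of 0.\<close>
definition block :: "real \<Rightarrow> real^'n \<Rightarrow> real^'n^'n \<Rightarrow> real^('n option)^('n option)" where
  "block \<rho> y Y = (\<chi> i j. case (i, j) of
      (None, None) \<Rightarrow> \<rho>
    | (None, Some j') \<Rightarrow> y $ j'
    | (Some i', None) \<Rightarrow> y $ i'
    | (Some i', Some j') \<Rightarrow> Y $ i' $ j')"

end

theory Submission imports Defs begin

lemma sum_list_additive3:
  fixes \<Phi> :: "'a::monoid_add \<Rightarrow> 'b::monoid_add \<Rightarrow> 'c::monoid_add \<Rightarrow> 'd::monoid_add"
  assumes "\<And>a1 a2 b1 b2 c1 c2. \<Phi> (a1+a2) (b1+b2) (c1+c2) = \<Phi> a1 b1 c1 + \<Phi> a2 b2 c2"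
    and "\<Phi> 0 0 0 = 0"
  shows "\<Phi> (\<Sum>h\<leftarrow>hs. f h) (\<Sum>h\<leftarrow>hs. g h) (\<Sum>h\<leftarrow>hs. k h) = (\<Sum>h\<leftarrow>hs. \<Phi> (f h) (g h) (k h))"
  using assms by (induct hs) auto

lemma outer_add_left: "outer (u + v) w = outer u w + outer v w"
  by (simp add: outer_def vec_eq_iff algebra_simps)
lemma outer_add_right: "outer w (u + v) = outer w u + outer w v"
  by (simp add: outer_def vec_eq_iff algebra_simps)
lemma outer_scale_left: "outer (c *\<^sub>R u) w = c *\<^sub>R outer u w"
  by (simp add: outer_def vec_eq_iff algebra_simps)
lemma outer_scale_right: "outer w (c *\<^sub>R u) = c *\<^sub>R outer w u"
  by (simp add: outer_def vec_eq_iff algebra_simps)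
lemma outer_zero_left[simp]: "outer 0 w = 0" by (simp add: outer_def vec_eq_iff)
lemma outer_zero_right[simp]: "outer w 0 = 0" by (simp add: outer_def vec_eq_iff)

lemma frob_inner_outer: "frob_inner M (outer u v) = u \<bullet> (M *v v)"
  unfolding frob_inner_def trace_def matrix_matrix_mult_def transpose_def outer_def
    inner_vec_def matrix_vector_mult_def
  by (simp add: sum_distrib_left mult_ac)

lemma frob_inner_add: "frob_inner M (X + Y) = frob_inner M X + frob_inner M Y"
  unfolding frob_inner_def trace_def matrix_matrix_mult_def transpose_def
  by (simp add: sum.distrib distrib_left)

lemma frob_inner_zero[simp]: "frob_inner M 0 = 0"
  unfolding frob_inner_def trace_def matrix_matrix_mult_def transpose_def
  by simp

lemma trace_outer: "trace (outer u v) = u \<bullet> v"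
  by (simp add: trace_def outer_def inner_vec_def)

lemma trace_scale: "trace (c *\<^sub>R (M::real^'k^'k)) = c * trace M"
  by (simp add: trace_def sum_distrib_left)

lemma mat_outer_left: "C ** outer u v = outer (C *v u) v"
  by (simp add: matrix_matrix_mult_def outer_def matrix_vector_mult_def vec_eq_iff sum_distrib_right sum_distrib_left mult_ac)

lemma mat_outer_right: "outer u v ** transpose C = outer u (C *v v)"
  by (simp add: matrix_matrix_mult_def outer_def matrix_vector_mult_def vec_eq_iff sum_distrib_left
      transpose_def mult_ac)

lemma block_add: "block (a1+a2) (b1+b2) (c1+c2) = block a1 b1 c1 + block a2 b2 c2"
  by (simp add: block_def vec_eq_iff split: option.splits)

lemma block_zero: "block 0 0 0 = 0"
  by (simp add: block_def vec_eq_iff split: option.splits)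

definition tt :: "real^(('n::finite) option) \<Rightarrow> real" where "tt h = h $ None"
definition zz :: "real^(('n::finite) option) \<Rightarrow> real^'n" where "zz h = (\<chi> i. h $ Some i)"

lemma block_outer: "outer h h = block ((tt h)^2) (tt h *\<^sub>R zz h) (outer (zz h) (zz h))"
  unfolding vec_eq_iff
proof (intro allI)
  fix i j show "outer h h $ i $ j = block ((tt h)^2) (tt h *\<^sub>R zz h) (outer (zz h) (zz h)) $ i $ j"
    by (cases i; cases j) (simp_all add: block_def outer_def tt_def zz_def power2_eq_square mult.commute)
qed

lemma block_inj:
  assumes "block r y Y = block r' y' Y'" shows "r = r'" "y = y'" "Y = Y'"
proof -
  have e: "\<And>i j. block r y Y $ i $ j = block r' y' Y' $ i $ j" using assms by simp
  show "r = r'" using e[of None None] by (simp add: block_def)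
  show "y = y'" using e[of "Some _" None] by (simp add: block_def vec_eq_iff)
  show "Y = Y'" using e[of "Some _" "Some _"] by (simp add: block_def vec_eq_iff)
qed

lemma matrix_add_rdistrib': "(A + B) ** C = A ** C + B ** (C::real^'a^'b)"
  by (vector matrix_matrix_mult_def sum.distrib[symmetric] field_simps)

lemma TR_add:
  fixes C :: "real^'n^'m"
  shows "trace (C ** (Y1+Y2) ** transpose C - outer (C *v (y1+y2)) d - outer d (C *v (y1+y2))
      + (r1+r2) *\<^sub>R outer d d)
   = trace (C ** Y1 ** transpose C - outer (C *v y1) d - outer d (C *v y1) + r1 *\<^sub>R outer d d)
   + trace (C ** Y2 ** transpose C - outer (C *v y2) d - outer d (C *v y2) + r2 *\<^sub>R outer d d)"
  by (simp add: matrix_add_ldistrib matrix_add_rdistrib' trace_add trace_sub trace_scale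
      matrix_vector_right_distrib outer_add_left outer_add_right algebra_simps)

lemma trace_zero0: "trace (0::real^'k^'k) = 0" by (simp add: trace_def)

lemma TR_zero:
  fixes C :: "real^'n^'m"
  shows "trace (C ** 0 ** transpose C - outer (C *v 0) d - outer d (C *v 0) + 0 *\<^sub>R outer d d) = 0"
  by (simp add: trace_def)

lemma TR_one:
  fixes C :: "real^'n^'m"
  shows "trace (C ** outer z z ** transpose C - outer (C *v (t *\<^sub>R z)) d - outer d (C *v (t *\<^sub>R z))
      + t^2 *\<^sub>R outer d d) = (norm (C *v z - t *\<^sub>R d))^2"
  unfolding power2_norm_eq_inner by (simp add: mat_outer_left mat_outer_right trace_add trace_sub trace_scale trace_outer
      matrix_vector_mult_scaleR outer_scale_left outer_scale_right 
      inner_diff_left inner_diff_right inner_commute algebra_simps power2_eq_square)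

lemma recession:
  fixes C :: "real^'n^'m"
  assumes x0: "\<forall>i. 0 \<le> x0 $ i" "C *v x0 = d"
    and bd: "bounded {x. (\<forall>i. 0 \<le> x $ i) \<and> C *v x = d}"
    and z: "\<forall>i. 0 \<le> z $ i" "C *v z = 0"
  shows "z = 0"
proof (rule ccontr)
  assume nz: "z \<noteq> 0"
  obtain M where M: "\<And>x. x \<in> {x. (\<forall>i. 0 \<le> x $ i) \<and> C *v x = d} \<Longrightarrow> norm x \<le> M"
    using bd unfolding bounded_iff by blast
  define s where "s = (M + norm x0 + 1) / norm z"
  have nzp: "norm z > 0" using nz by simp
  have M0: "M \<ge> 0" using M[of x0] x0 by (auto intro: order_trans[OF norm_ge_zero])
  have s0: "s \<ge> 0" unfolding s_def using nzp M0 by simp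
  have "x0 + s *\<^sub>R z \<in> {x. (\<forall>i. 0 \<le> x $ i) \<and> C *v x = d}"
    using x0 z s0 by (simp add: matrix_vector_right_distrib matrix_vector_mult_scaleR)
  then have le: "norm (x0 + s *\<^sub>R z) \<le> M" by (rule M)
  have "s * norm z = norm ((x0 + s *\<^sub>R z) - x0)" using s0 by simp
  also have "\<dots> \<le> norm (x0 + s *\<^sub>R z) + norm x0" by (rule norm_triangle_ineq4)
  finally have "s * norm z \<le> M + norm x0" using le by simp
  moreover have "s * norm z = M + norm x0 + 1" unfolding s_def using nzp by simp
  ultimately show False by simp
qed

theorem corollary3:
  fixes A B :: "real^'n^'n" and a b :: "real^'n" and a0 b0 :: real
    and C :: "real^'n^'m" and d :: "real^'m"
  assumes "transpose A = A" and "transpose B = B"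
    and ne: "{x. (\<forall>i. 0 \<le> x $ i) \<and> C *v x = d} \<noteq> {}"
    and bd: "bounded {x. (\<forall>i. 0 \<le> x $ i) \<and> C *v x = d}"
    and qpos: "\<forall>x. (\<forall>i. 0 \<le> x $ i) \<and> C *v x = d \<longrightarrow> x \<bullet> (A *v x) + a \<bullet> x + a0 > 0"
  shows "Inf {(x \<bullet> (B *v x) + b \<bullet> x + b0) / (x \<bullet> (A *v x) + a \<bullet> x + a0) | x.
                (\<forall>i. 0 \<le> x $ i) \<and> C *v x = d}
       = Inf {b0 * \<rho> + b \<bullet> y + frob_inner B Y | \<rho> y Y.
                block \<rho> y Y \<in> CP \<and>
                frob_inner A Y + a \<bullet> y + a0 * \<rho> = 1 \<and>
                trace (C ** Y ** transpose C - outer (C *v y) d - outer d (C *v y)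
                       + \<rho> *\<^sub>R outer d d) = 0}"
proof -
  define F where "F = {x. (\<forall>i. 0 \<le> x $ i) \<and> C *v x = d}"
  define p where "p x = x \<bullet> (B *v x) + b \<bullet> x + b0" for x
  define q where "q x = x \<bullet> (A *v x) + a \<bullet> x + a0" for x
  have contM: "\<And>M::real^'n^'k. continuous_on S (\<lambda>x. M *v x)" for S
    by (intro linear_continuous_on linear_conv_bounded_linear[THEN iffD1] matrix_vector_mul_linear)
  have "closed {x::real^'n. C *v x = d}"
    by (intro closed_Collect_eq continuous_on_const contM)
  then have "closed F" unfolding F_def
    using closed_Int[OF closed_positive_orthant] by (simp add: Collect_conj_eq)
  with bd have compF: "compact F" unfolding F_def by (simp add: compact_eq_bounded_closed F_def)
  have qF: "\<And>x. x \<in> F \<Longrightarrow> q x > 0" using qpos unfolding F_def q_def by blast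
  have "continuous_on F (\<lambda>x. p x / q x)" unfolding p_def q_def
    apply (intro continuous_intros contM)
    using qF[unfolded q_def] by (metis less_irrefl)
  then obtain xm where xm: "xm \<in> F" and xmin: "\<And>x. x \<in> F \<Longrightarrow> p xm / q xm \<le> p x / q x"
    using continuous_attains_inf[OF compF ne[folded F_def]] by blast
  define m where "m = p xm / q xm"
  have pq: "\<And>x. x \<in> F \<Longrightarrow> m * q x \<le> p x"
    using xmin qF unfolding m_def by (simp add: pos_le_divide_eq mult.commute)
  have L: "Inf {(x \<bullet> (B *v x) + b \<bullet> x + b0) / (x \<bullet> (A *v x) + a \<bullet> x + a0) | x.
                (\<forall>i. 0 \<le> x $ i) \<and> C *v x = d} = m"
    apply (rule cInf_eq_minimum)
    using xm xmin unfolding m_def p_def q_def F_def by auto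
  have lower: "m \<le> b0 * \<rho> + b \<bullet> y + frob_inner B Y"
    if cp: "block \<rho> y Y \<in> CP" and con: "frob_inner A Y + a \<bullet> y + a0 * \<rho> = 1"
      and tr: "trace (C ** Y ** transpose C - outer (C *v y) d - outer d (C *v y)
                       + \<rho> *\<^sub>R outer d d) = 0" for \<rho> y Y
  proof -
    obtain hs where hs0: "\<forall>h\<in>set hs. \<forall>i. 0 \<le> h $ i"
      and hsM: "block \<rho> y Y = sum_list (map (\<lambda>h. outer h h) hs)"
      using cp unfolding CP_def by blast
    have "sum_list (map (\<lambda>h. outer h h) hs) = (\<Sum>h\<leftarrow>hs. block ((tt h)^2) (tt h *\<^sub>R zz h) (outer (zz h) (zz h)))"
      using block_outer by metis
    also have "\<dots> = block (\<Sum>h\<leftarrow>hs. (tt h)^2) (\<Sum>h\<leftarrow>hs. tt h *\<^sub>R zz h) (\<Sum>h\<leftarrow>hs. outer (zz h) (zz h))"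
      by (rule sum_list_additive3[symmetric]) (auto simp: block_add block_zero)
    finally have bb: "block \<rho> y Y = block (\<Sum>h\<leftarrow>hs. (tt h)^2) (\<Sum>h\<leftarrow>hs. tt h *\<^sub>R zz h) (\<Sum>h\<leftarrow>hs. outer (zz h) (zz h))"
      using hsM by simp
    note e = block_inj[OF bb]
    define obj where "obj h = b0 * (tt h)^2 + b \<bullet> (tt h *\<^sub>R zz h) + frob_inner B (outer (zz h) (zz h))" for h
    define cn where "cn h = frob_inner A (outer (zz h) (zz h)) + a \<bullet> (tt h *\<^sub>R zz h) + a0 * (tt h)^2" for h
    have objs: "b0 * \<rho> + b \<bullet> y + frob_inner B Y = (\<Sum>h\<leftarrow>hs. obj h)"
      unfolding e obj_def
      by (rule sum_list_additive3[where \<Phi>="\<lambda>r y Y. b0 * r + b \<bullet> y + frob_inner B Y"])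
        (auto simp: frob_inner_add inner_add_right algebra_simps)
    have cns: "frob_inner A Y + a \<bullet> y + a0 * \<rho> = (\<Sum>h\<leftarrow>hs. cn h)"
      unfolding e cn_def
      by (rule sum_list_additive3[where \<Phi>="\<lambda>r y Y. frob_inner A Y + a \<bullet> y + a0 * r"])
        (auto simp: frob_inner_add inner_add_right algebra_simps)
    have trs: "(\<Sum>h\<leftarrow>hs. (norm (C *v zz h - tt h *\<^sub>R d))^2) = 0"
      using tr unfolding e
      by (subst (asm) sum_list_additive3[where \<Phi>="\<lambda>r y Y. trace (C ** Y ** transpose C - outer (C *v y) d - outer d (C *v y)
                       + r *\<^sub>R outer d d)"]) (simp_all only: TR_add TR_zero TR_one trace_zero0)
    have Cz: "C *v zz h = tt h *\<^sub>R d" if "h \<in> set hs" for h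
    proof -
      have "\<forall>x\<in>set (map (\<lambda>h. (norm (C *v zz h - tt h *\<^sub>R d))^2) hs). x = 0"
        using trs by (subst (asm) sum_list_nonneg_eq_0_iff) auto
      then show ?thesis using that by auto
    qed
    have each: "m * cn h \<le> obj h" if h: "h \<in> set hs" for h
    proof -
      have t0: "tt h \<ge> 0" using hs0 h unfolding tt_def by auto
      have z0: "\<forall>i. 0 \<le> zz h $ i" using hs0 h unfolding zz_def by auto
      show ?thesis
      proof (cases "tt h = 0")
        case True
        have "zz h = 0"
          using recession[of xm C d "zz h"] xm z0 Cz[OF h] True bd unfolding F_def by auto
        then show ?thesis unfolding obj_def cn_def using True by (simp add: frob_inner_outer)
      next
        case False
        then have tp: "tt h > 0" using t0 by simp
        define x where "x = (1 / tt h) *\<^sub>R zz h"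
        have xF: "x \<in> F" unfolding F_def x_def using z0 tp Cz[OF h]
          by (simp add: matrix_vector_mult_scaleR)
        have zx: "zz h = tt h *\<^sub>R x" unfolding x_def using tp by simp
        have "obj h = (tt h)^2 * p x" unfolding obj_def p_def zx
          by (simp add: frob_inner_outer matrix_vector_mult_scaleR algebra_simps power2_eq_square)
        moreover have "cn h = (tt h)^2 * q x" unfolding cn_def q_def zx
          by (simp add: frob_inner_outer matrix_vector_mult_scaleR algebra_simps power2_eq_square)
        moreover have "(tt h)^2 * (m * q x) \<le> (tt h)^2 * p x"
          using pq[OF xF] by (simp add: mult_left_mono)
        ultimately show ?thesis by (simp add: mult.left_commute)
      qed
    qed
    have "m = m * (\<Sum>h\<leftarrow>hs. cn h)" using con cns by simp
    also have "\<dots> = (\<Sum>h\<leftarrow>hs. m * cn h)" by (simp add: sum_list_const_mult)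
    also have "\<dots> \<le> (\<Sum>h\<leftarrow>hs. obj h)" by (rule sum_list_mono) (rule each)
    finally show ?thesis using objs by simp
  qed
  define s where "s = sqrt (1 / q xm)"
  have qxm: "q xm > 0" using qF xm by simp
  have s2: "s^2 = 1 / q xm" unfolding s_def using qxm by simp
  define h where "h = (\<chi> i. case i of None \<Rightarrow> s | Some j \<Rightarrow> s * xm $ j)"
  have th: "tt h = s" unfolding h_def tt_def by simp
  have zh: "zz h = s *\<^sub>R xm" unfolding h_def zz_def by (simp add: vec_eq_iff)
  have s0: "s \<ge> 0" unfolding s_def using qxm by simp
  have h0: "\<forall>i. 0 \<le> h $ i" using s0 xm unfolding h_def F_def by (auto split: option.splits)
  have inCP: "block (s^2) (s *\<^sub>R (s *\<^sub>R xm)) (outer (s *\<^sub>R xm) (s *\<^sub>R xm)) \<in> CP"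
    unfolding CP_def using h0 block_outer[of h] th zh
    by (intro CollectI exI[of _ "[h]"]) simp
  have Cxm: "C *v xm = d" using xm unfolding F_def by simp
  have mem: "m \<in> {b0 * \<rho> + b \<bullet> y + frob_inner B Y | \<rho> y Y.
                block \<rho> y Y \<in> CP \<and>
                frob_inner A Y + a \<bullet> y + a0 * \<rho> = 1 \<and>
                trace (C ** Y ** transpose C - outer (C *v y) d - outer d (C *v y)
                       + \<rho> *\<^sub>R outer d d) = 0}"
  proof (intro CollectI exI conjI)
    show "block (s^2) (s *\<^sub>R (s *\<^sub>R xm)) (outer (s *\<^sub>R xm) (s *\<^sub>R xm)) \<in> CP" by (rule inCP)
    have "frob_inner A (outer (s *\<^sub>R xm) (s *\<^sub>R xm)) + a \<bullet> (s *\<^sub>R (s *\<^sub>R xm)) + a0 * s^2 = s^2 * q xm"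
      unfolding q_def by (simp add: frob_inner_outer matrix_vector_mult_scaleR algebra_simps power2_eq_square)
    then show "frob_inner A (outer (s *\<^sub>R xm) (s *\<^sub>R xm)) + a \<bullet> (s *\<^sub>R (s *\<^sub>R xm)) + a0 * s^2 = 1"
      using s2 qxm by simp
    show "trace (C ** outer (s *\<^sub>R xm) (s *\<^sub>R xm) ** transpose C - outer (C *v (s *\<^sub>R (s *\<^sub>R xm))) d
       - outer d (C *v (s *\<^sub>R (s *\<^sub>R xm))) + s^2 *\<^sub>R outer d d) = 0"
      by (subst TR_one) (simp add: matrix_vector_mult_scaleR Cxm)
    have "b0 * s^2 + b \<bullet> (s *\<^sub>R (s *\<^sub>R xm)) + frob_inner B (outer (s *\<^sub>R xm) (s *\<^sub>R xm)) = s^2 * p xm"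
      unfolding p_def by (simp add: frob_inner_outer matrix_vector_mult_scaleR algebra_simps power2_eq_square)
    then show "m = b0 * s^2 + b \<bullet> (s *\<^sub>R (s *\<^sub>R xm)) + frob_inner B (outer (s *\<^sub>R xm) (s *\<^sub>R xm))"
      using s2 unfolding m_def by simp
  qed
  have R: "Inf {b0 * \<rho> + b \<bullet> y + frob_inner B Y | \<rho> y Y.
                block \<rho> y Y \<in> CP \<and>
                frob_inner A Y + a \<bullet> y + a0 * \<rho> = 1 \<and>
                trace (C ** Y ** transpose C - outer (C *v y) d - outer d (C *v y)
                       + \<rho> *\<^sub>R outer d d) = 0} = m"
    by (rule cInf_eq_minimum[OF mem]) (use lower in blast)
  show ?thesis using L R by simp
qed

end
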